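(* Let $h$ and $k$ be coprime odd integers with $k>0$. Then $$B_{1}(h,k)=\frac{h}{2k}\sum_{\substack{j=1\\ j\neq\frac{k+1}{2}}}^{k}\tan\left(\frac{\pi h(2j-1)}{2k}\right)\cot\left(\frac{\pi(2j-1)}{2k}\right)+\frac{1}{2k}-\frac{1}{2}.$$
   Context: $[x]$ denotes the greatest integer $\le x$. For integers $h,k$ with $k>0$ and $\gcd(h,k)=1$, $$B_{1}(h,k)=\sum_{j=1}^{k-1}(-1)^{j+\left[\frac{hj}{k}\right]}\left[\frac{hj}{k}\right].$$ *)

theory Defs
  imports Complex_Main
begin

definition B1 :: "int \<Rightarrow> int \<Rightarrow> real" where
  "B1 h k = (\<Sum>j\<in>{1..k-1}.
     let f = \<lfloor>real_of_int (h * j) / real_of_int k\<rfloor> in (if even (j + f) then 1 else -1) * real_of_int f)"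

end

theory Submission
  imports Defs
begin


lemma G2: fixes z :: complex
  shows "(z-1)^2 * (\<Sum>j<n. of_nat j * z^j) = (of_nat n - 1)*z^(n+1) - of_nat n * z^n + z"
  by (induction n) (auto simp: algebra_simps power2_eq_square)

lemma G1: fixes z :: complex assumes "z^k = 1" "z \<noteq> 1"
  shows "(\<Sum>j<k. z^j) = 0"
  using geometric_sum[OF assms(2), of k] assms(1) by simp

lemma G3: fixes z :: complex assumes "z^k = 1" "z \<noteq> 1"
  shows "(\<Sum>j<k. of_nat j * z^j) = of_nat k / (z - 1)"
proof -
  have "(z-1)^2 * (\<Sum>j<k. of_nat j * z^j) = of_nat k * (z - 1)"
    using G2[of z k] assms(1) by (simp add: algebra_simps)
  hence "(z-1) * ((z-1) * (\<Sum>j<k. of_nat j * z^j)) = (z-1) * of_nat k"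
    by (simp add: power2_eq_square algebra_simps)
  moreover have nz: "z - 1 \<noteq> 0" using assms by simp
  ultimately have "(z-1) * (\<Sum>j<k. of_nat j * z^j) = of_nat k" by simp
  thus ?thesis using nz by (simp add: field_simps)
qed

lemma aux_sc: "sin (\<phi>::real) = cos \<phi> * (cos \<phi> * sin \<phi>) + sin \<phi> * (sin \<phi> * sin \<phi>)"
proof -
  have e: "sin \<phi> * sin \<phi> = 1 - cos \<phi> * cos \<phi>" using sin_squared_eq[of \<phi>] by (simp add: power2_eq_square)
  show ?thesis by (subst e) (simp add: algebra_simps)
qed

lemma L2:
  fixes k :: nat and \<phi> :: real
  assumes ok: "odd k" and c: "cos (2*k*\<phi>) = -1"
  shows "(\<Sum>j=1..<k. (-1)^j * (real j / k - 1/2) * sin (2*j*\<phi>)) = tan \<phi> / 2"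
proof -
  have s: "sin (2*k*\<phi>) = 0" using sin_squared_eq[of "2*k*\<phi>"] c by simp
  have ck: "cis (2*k*\<phi>) = -1" using s c by (simp add: complex_eq_iff)
  define z where "z = - cis (2*\<phi>)"
  have zj: "z^j = (-1)^j * cis (2*j*\<phi>)" for j :: nat
    unfolding z_def by (subst power_minus) (simp add: DeMoivre mult.commute mult.left_commute)
  have Imz: "Im (z^j) = (-1)^j * sin (2*j*\<phi>)" for j :: nat
    by (simp add: zj)
  have LHS: "(\<Sum>j=1..<k. (-1)^j * (real j / k - 1/2) * sin (2*j*\<phi>))
      = Im (\<Sum>j=1..<k. of_real (real j / k - 1/2) * z^j)"
    by (simp add: Im_sum Imz mult.commute mult.left_commute)
  show ?thesis
  proof (cases "cos \<phi> = 0")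
    case True
    have "cis (2*\<phi>) = -1" using True sin_cos_squared_add[of \<phi>]
      by (simp add: complex_eq_iff cos_double sin_double)
    hence "z = 1" by (simp add: z_def)
    thus ?thesis using LHS True by (simp add: tan_def)
  next
    case False
    have zk: "z^k = 1" using zj[of k] ck ok by simp
    have zn1: "z \<noteq> 1"
    proof
      assume "z = 1"
      hence "cis (2*\<phi>) = -1" unfolding z_def by (metis minus_minus)
      hence "cos (2*\<phi>) = -1" by (simp add: complex_eq_iff)
      hence "cos \<phi> ^ 2 = 0" using sin_squared_eq[of \<phi>] by (simp add: cos_double)
      thus False using False by simp
    qed
    have kpos: "k > 0" using ok by (cases k) auto
    have split: "(\<Sum>j<k. of_real (real j / k - 1/2) * z^j) =
         of_real (real 0 / k - 1/2) * z^0 + (\<Sum>j=1..<k. of_real (real j / k - 1/2) * z^j)"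
      using kpos by (simp add: lessThan_atLeast0 sum.atLeast_Suc_lessThan)
    have "(\<Sum>j<k. of_real (real j / k - 1/2) * z^j) =
          (1 / of_nat k) * (\<Sum>j<k. of_nat j * z^j) - (1/2) * (\<Sum>j<k. z^j)"
      by (simp add: sum_distrib_left sum_subtractf algebra_simps)
    also have "\<dots> = 1 / (z - 1)" using G1[OF zk zn1] G3[OF zk zn1] kpos by simp
    finally have S: "(\<Sum>j=1..<k. of_real (real j / k - 1/2) * z^j) = 1/(z-1) + 1/2"
      using split by simp
    have c2: "cos (2*\<phi>) = cos \<phi>^2 - sin \<phi>^2" by (rule cos_double)
    have s2: "sin (2*\<phi>) = 2*sin \<phi>*cos \<phi>" by (rule sin_double)
    have p: "sin \<phi>^2 + cos \<phi>^2 = 1" by simp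
    have key: "z + 1 = \<i> * of_real (tan \<phi>) * (z - 1)"
      unfolding z_def complex_eq_iff using False
      apply (simp add: c2 s2 tan_def)
      apply (simp add: field_simps)
      using sin_squared_eq[of "\<phi>"] aux_sc[of \<phi>] by (auto simp: algebra_simps power2_eq_square)
    have zm: "z - 1 \<noteq> 0" using zn1 by simp
    have "1/(z-1) + 1/2 = (z+1) / (2*(z-1))" using zm by (simp add: field_simps)
    also have "\<dots> = \<i> * of_real (tan \<phi>) / 2" using zm unfolding key by (simp add: field_simps)
    finally have T: "(\<Sum>j=1..<k. of_real (real j / k - 1/2) * z^j) = \<i> * of_real (tan \<phi>) / 2"
      using S by simp
    show ?thesis unfolding LHS T by simp
  qed
qed
definition ang :: "nat \<Rightarrow> nat \<Rightarrow> real" where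
  "ang K i = pi * (2 * real i + 1) / (2 * real K)"

lemma Csum:
  fixes K r :: nat assumes K: "K > 0"
  shows "(\<Sum>i<K. cos (2 * real r * ang K i)) = (if K dvd r then real K * (-1)^(r div K) else 0)"
proof (cases "K dvd r")
  case True
  then obtain q where r: "r = K * q" by auto
  have "cos (2 * real r * ang K i) = (-1)^q" for i
  proof -
    have "2 * real r * ang K i = pi * real (q * (2*i+1))" using K unfolding ang_def r by (simp add: field_simps)
    hence "cos (2 * real r * ang K i) = (-1)^(q*(2*i+1))" by (simp only: cos_npi2)
    thus ?thesis by (simp add: minus_one_power_iff)
  qed
  thus ?thesis using True K r by simp
next
  case False
  define u where "u = cis (pi * real r / real K)"
  define w where "w = cis (2 * pi * real r / real K)"
  have "w^K = cis (2*pi*real r)" unfolding w_def DeMoivre using K by (simp add: field_simps)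
  hence wk: "w^K = 1" using cis_multiple_2pi[of "real r"] by simp
  have w1: "w \<noteq> 1"
  proof
    assume "w = 1"
    hence "cos (2 * pi * real r / real K) = 1" unfolding w_def by (simp add: complex_eq_iff)
    then obtain n :: int where n: "2 * pi * real r / real K = of_int n * 2 * pi" by (auto simp: cos_one_2pi_int)
    hence "real r = of_int n * real K" using K by (simp add: field_simps)
    hence "int r = n * int K" by (metis of_int_eq_iff of_int_mult of_int_of_nat_eq)
    hence "int K dvd int r" by simp
    thus False using False by (simp del: of_nat_dvd_iff add: int_dvd_int_iff)
  qed
  have trm: "cos (2 * real r * ang K i) = Re (u * w^i)" for i
  proof -
    have ae: "pi * real r / real K + real i * (2 * pi * real r / real K) = 2 * real r * ang K i"
      using K by (simp add: ang_def field_simps)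
    have "u * w^i = cis (2 * real r * ang K i)" unfolding u_def w_def DeMoivre cis_mult ae ..
    thus ?thesis by simp
  qed
  have "(\<Sum>i<K. cos (2 * real r * ang K i)) = Re (u * (\<Sum>i<K. w^i))"
    by (simp add: trm sum_distrib_left Re_sum)
  also have "\<dots> = 0" using G1[OF wk w1] by simp
  finally show ?thesis using False by simp
qed

lemma cubic_aux: fixes s c Y :: real assumes "s*s = 1 - c*c"
  shows "c*(c*(c*Y)) + c*(s*(s*Y)) = c*Y"
proof -
  have "c*(c*(c*Y)) + c*(s*(s*Y)) = c*Y*(s*s + c*c)" by (simp add: algebra_simps)
  thus ?thesis using assms by simp
qed

lemma Dstep: assumes "sin a \<noteq> 0"
  shows "cot a * (sin (2*(real n+1)*a) - sin (2*real n*a)) = cos (2*(real n+1)*a) + cos (2*real n*a)"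
proof -
  have e1: "(2*(real n+1)*a - 2*real n*a)/2 = a" by (simp add: algebra_simps)
  have e2: "(2*(real n+1)*a + 2*real n*a)/2 = (2*real n+1)*a" by (simp add: algebra_simps)
  show ?thesis unfolding sin_diff_sin cos_plus_cos e1 e2 cot_def using assms by (simp add: field_simps)
qed

lemma ang_sin: assumes "i < K" shows "sin (ang K i) \<noteq> 0"
proof -
  have "0 < ang K i" using assms by (simp add: ang_def)
  moreover have "ang K i < pi"
  proof -
    have "(2 * real i + 1) / (2 * real K) < 1" using assms by (simp add: field_simps)
    hence "pi * ((2 * real i + 1) / (2 * real K)) < pi * 1" by (intro mult_strict_left_mono) auto
    thus ?thesis unfolding ang_def by simp
  qed
  ultimately show ?thesis using sin_gt_zero by force
qed

definition cc :: "nat \<Rightarrow> nat \<Rightarrow> real" where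
  "cc K n = (if K dvd n then (-1)^(n div K) else 0)"

lemma L1nat:
  fixes K n :: nat assumes K: "K > 0"
  shows "(1 / real K) * (\<Sum>i<K. cot (ang K i) * sin (2 * real n * ang K i)) = (-1)^(n div K) - cc K n"
proof (induction n)
  case 0
  then show ?case by (simp add: cc_def)
next
  case (Suc n)
  have "(\<Sum>i<K. cot (ang K i) * sin (2 * real (Suc n) * ang K i)) - (\<Sum>i<K. cot (ang K i) * sin (2 * real n * ang K i))
      = (\<Sum>i<K. cos (2 * real (Suc n) * ang K i)) + (\<Sum>i<K. cos (2 * real n * ang K i))"
    unfolding sum_subtractf[symmetric] sum.distrib[symmetric]
    using Dstep[OF ang_sin, of _ K n] by (intro sum.cong) (auto simp: algebra_simps)
  also have "\<dots> = real K * (cc K (Suc n) + cc K n)" unfolding Csum[OF K] cc_def by (simp add: algebra_simps)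
  finally have d: "(1 / real K) * (\<Sum>i<K. cot (ang K i) * sin (2 * real (Suc n) * ang K i)) =
      (1 / real K) * (\<Sum>i<K. cot (ang K i) * sin (2 * real n * ang K i)) + (cc K (Suc n) + cc K n)"
    using K by (simp add: field_simps)
  have par: "(-1::real)^(Suc n div K) = (-1)^(n div K) + 2 * cc K (Suc n)"
  proof (cases "K dvd Suc n")
    case True
    have "Suc n div K = Suc (n div K)" using True div_Suc[of n K] by simp
    thus ?thesis using True by (simp add: cc_def)
  next
    case False
    have "Suc n div K = n div K" using False div_Suc[of n K] by (auto simp: dvd_eq_mod_eq_0)
    thus ?thesis using False by (simp add: cc_def)
  qed
  show ?case unfolding d Suc.IH par by simp
qed


definition sgi :: "int \<Rightarrow> real" where "sgi x = (if even x then 1 else -1)"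

lemma L1int:
  fixes K :: nat and n :: int assumes K: "K > 0" and nd: "\<not> int K dvd n"
  shows "sgi (n div int K) = (1 / real K) * (\<Sum>i<K. cot (ang K i) * sin (2 * of_int n * ang K i))"
proof (cases "n \<ge> 0")
  case True
  define m where "m = nat n"
  have n: "n = int m" using True by (simp add: m_def)
  have ndm: "\<not> K dvd m" using nd n by simp
  have "n div int K = int (m div K)" using n by (simp add: zdiv_int)
  moreover have "(-1::real)^(m div K) = sgi (int (m div K))" by (simp add: sgi_def minus_one_power_iff)
  ultimately show ?thesis using L1nat[OF K, of m] ndm n by (simp add: cc_def)
next
  case False
  define m where "m = nat (-n)"
  have n: "n = - int m" using False by (simp add: m_def)
  have ndm: "\<not> K dvd m" using nd n by simp
  have "m mod K \<noteq> 0" using ndm by (simp add: dvd_eq_mod_eq_0)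
  hence "int (m mod K) \<noteq> 0" by simp
  hence "int m mod int K \<noteq> 0" by (metis zmod_int)
  hence e1: "(- int m) div int K = - (int m div int K) - 1"
    using K zdiv_zminus1_eq_if[of "int K" "int m"] by (simp only: if_False of_nat_eq_0_iff neq0_conv[symmetric] not_False_eq_True simp_thms)
  have e2: "int m div int K = int (m div K)" by (simp only: zdiv_int)
  have "n div int K = - int (m div K) - 1" unfolding n e1 e2 ..
  hence "sgi (n div int K) = - ((-1::real)^(m div K))"
  proof -
    assume a: "n div int K = - int (m div K) - 1"
    have "even (- int (m div K) - 1) = odd (m div K)" by simp
    thus ?thesis unfolding a sgi_def by (simp add: minus_one_power_iff)
  qed
  moreover have "(\<Sum>i<K. cot (ang K i) * sin (2 * of_int n * ang K i)) = - (\<Sum>i<K. cot (ang K i) * sin (2 * real m * ang K i))"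
  proof -
    have "2 * of_int (- int m) * x = - (2 * real m * x)" for x :: real by simp
    thus ?thesis unfolding sum_negf[symmetric] n by (intro sum.cong) (simp_all only: sin_minus mult_minus_right)
  qed
  ultimately show ?thesis using L1nat[OF K, of m] ndm by (simp add: cc_def)
qed

lemma altsum: "(\<Sum>r=1..<2*a+1. (-1::real)^r) = 0 \<and> (\<Sum>r=1..<2*a+1. (-1::real)^r * real r) = real a"
proof (induction a)
  case 0 then show ?case by simp
next
  case (Suc a)
  have e: "2 * Suc a + 1 = Suc (Suc (2*a+1))" by simp
  show ?case unfolding e using Suc by (simp add: sum.atLeastLessThan_Suc)
qed

lemma bij_r:
  fixes h :: int and K :: nat assumes K: "K > 0" and cp: "coprime h (int K)"
  shows "bij_betw (\<lambda>j. nat (h * int j mod int K)) {1..<K} {1..<K}"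
proof -
  let ?g = "\<lambda>j. nat (h * int j mod int K)"
  have nd: "\<not> int K dvd h * int j" if "j \<in> {1..<K}" for j
  proof
    assume "int K dvd h * int j"
    hence "int K dvd int j" using cp by (simp add: coprime_commute coprime_dvd_mult_right_iff)
    hence "K dvd j" by simp
    thus False using that by (auto dest: dvd_imp_le)
  qed
  have sub: "?g ` {1..<K} \<subseteq> {1..<K}"
  proof
    fix x assume "x \<in> ?g ` {1..<K}"
    then obtain j where j: "j \<in> {1..<K}" "x = ?g j" by auto
    have "h * int j mod int K \<noteq> 0" using nd[OF j(1)] by (simp add: dvd_eq_mod_eq_0)
    moreover have "h * int j mod int K \<ge> 0" "h * int j mod int K < int K" using K by auto
    ultimately show "x \<in> {1..<K}" using j(2) by auto
  qed
  have inj: "inj_on ?g {1..<K}"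
  proof (rule inj_onI)
    fix x y assume x: "x \<in> {1..<K}" and y: "y \<in> {1..<K}" and e: "?g x = ?g y"
    have "h * int x mod int K = h * int y mod int K" using e K by (simp add: nat_eq_iff2)
    hence "int K dvd h * int x - h * int y" by (simp add: mod_eq_dvd_iff)
    hence "int K dvd h * (int x - int y)" by (simp add: algebra_simps)
    hence d: "int K dvd (int x - int y)" using cp by (simp add: coprime_commute coprime_dvd_mult_right_iff)
    have "\<bar>int x - int y\<bar> < int K" using x y by auto
    show "x = y"
    proof (rule ccontr)
      assume "x \<noteq> y"
      hence "int x - int y \<noteq> 0" by simp
      hence "\<bar>int K\<bar> \<le> \<bar>int x - int y\<bar>" using dvd_imp_le_int d by blast
      thus False using \<open>\<bar>int x - int y\<bar> < int K\<close> by simp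
    qed
  qed
  have "?g ` {1..<K} = {1..<K}"
    by (rule card_subset_eq) (use sub inj in \<open>auto simp: card_image\<close>)
  thus ?thesis using inj by (simp add: bij_betw_def)
qed


theorem theorem24:
  fixes h k :: int
  assumes "coprime h k" and "odd h" and "odd k" and "k > 0"
  shows "B1 h k =
    real_of_int h / (2 * real_of_int k) *
      (\<Sum>j\<in>{1..k} - {(k + 1) div 2}.
         tan (pi * real_of_int h * real_of_int (2 * j - 1) / (2 * real_of_int k)) *
         cot (pi * real_of_int (2 * j - 1) / (2 * real_of_int k)))
    + 1 / (2 * real_of_int k) - 1 / 2"
proof -
  obtain K :: nat where kK: "k = int K" using assms(4) by (metis le_less nonneg_int_cases)
  have K: "K > 0" using assms(4) kK by simp
  have oK: "odd K" using assms(3) kK by simp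
  have cp: "coprime h (int K)" using assms(1) kK by simp
  define f where "f j = h * int j div int K" for j :: nat
  define r where "r j = nat (h * int j mod int K)" for j :: nat
  define a where "a i = ang K i" for i
  have P1: "B1 h k = (\<Sum>j\<in>{1..<K}. sgi (int j + f j) * real_of_int (f j))"
  proof -
    have "{1..k-1} = {1..<k}" by auto
    hence im: "{1..k-1} = int ` {1..<K}" using kK by (simp add: image_int_atLeastLessThan)
    have fl: "\<lfloor>real_of_int h * real j / real K\<rfloor> = h * int j div int K" for j :: nat
      using floor_divide_of_int_eq[of "h * int j" "int K"] by simp
    show ?thesis unfolding B1_def im
      by (subst sum.reindex) (auto simp: f_def sgi_def kK Let_def fl)
  qed
  have nd: "\<not> int K dvd h * int j" if "j \<in> {1..<K}" for j
  proof
    assume "int K dvd h * int j"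
    hence "int K dvd int j" using cp by (simp add: coprime_commute coprime_dvd_mult_right_iff)
    hence "K dvd j" by simp
    thus False using that by (auto dest: dvd_imp_le)
  qed
  have dec: "h * int j = int K * f j + int (r j)" for j
    unfolding f_def r_def using K by simp
  have par: "sgi (int j + f j) = (-1)^(r j)" for j
  proof -
    have "even (h * int j) = even (int K * f j + int (r j))" using dec[of j] by simp
    hence "even (int j) = (even (f j) = even (r j))" using assms(2) oK by (simp add: even_add)
    hence "even (int j + f j) = even (r j)" by (auto simp: even_add)
    thus ?thesis by (simp add: sgi_def minus_one_power_iff)
  qed
  have par2: "(-1::real)^(r j) = (-1)^j * sgi (f j)" for j
  proof -
    have "sgi (int j + f j) = sgi (int j) * sgi (f j)" by (auto simp: sgi_def even_add)
    thus ?thesis using par[of j] by (simp add: sgi_def minus_one_power_iff)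
  qed
  have fr: "real_of_int (f j) = (real_of_int h * real j - real (r j)) / real K" for j
  proof -
    have "real_of_int (h * int j) = real K * real_of_int (f j) + real (r j)"
      using dec[of j] by (metis of_int_add of_int_mult of_int_of_nat_eq)
    thus ?thesis using K by (simp add: field_simps)
  qed
  obtain m where m: "K = 2*m+1" using oK by (metis oddE)
  have bij: "bij_betw r {1..<K} {1..<K}" using bij_r[OF K cp] unfolding r_def .
  have S0: "(\<Sum>j\<in>{1..<K}. (-1::real)^(r j)) = 0"
    using sum.reindex_bij_betw[OF bij, of "\<lambda>x. (-1::real)^x"] altsum[of m] m by simp
  have S1: "(\<Sum>j\<in>{1..<K}. (-1::real)^(r j) * real (r j)) = real m"
    using sum.reindex_bij_betw[OF bij, of "\<lambda>x. (-1::real)^x * real x"] altsum[of m] m by simp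
  have P5: "B1 h k = real_of_int h * (\<Sum>j\<in>{1..<K}. (-1)^(r j) * (real j / real K - 1/2)) - real m / real K"
  proof -
    have "B1 h k = (\<Sum>j\<in>{1..<K}. (real_of_int h / real K) * ((-1)^(r j) * real j) - (1 / real K) * ((-1)^(r j) * real (r j)))"
      unfolding P1 par fr by (intro sum.cong) (auto simp: field_simps)
    also have "\<dots> = (real_of_int h / real K) * (\<Sum>j\<in>{1..<K}. (-1)^(r j) * real j) - real m / real K"
      unfolding sum_subtractf sum_distrib_left[symmetric] S1 by simp
    also have "(\<Sum>j\<in>{1..<K}. (-1::real)^(r j) * real j) = real K * (\<Sum>j\<in>{1..<K}. (-1)^(r j) * (real j / real K - 1/2))"
    proof -
      have "real K * (\<Sum>j\<in>{1..<K}. (-1::real)^(r j) * (real j / real K - 1/2))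
          = (\<Sum>j\<in>{1..<K}. (-1::real)^(r j) * real j) - (real K / 2) * (\<Sum>j\<in>{1..<K}. (-1::real)^(r j))"
        unfolding sum_distrib_left sum_subtractf[symmetric] using K by (intro sum.cong) (auto simp: field_simps)
      thus ?thesis using S0 by simp
    qed
    finally show ?thesis using K by simp
  qed
  have four: "(-1::real)^(r j) = (-1)^j * ((1 / real K) * (\<Sum>i<K. cot (a i) * sin (2 * real j * (real_of_int h * a i))))"
    if "j \<in> {1..<K}" for j
  proof -
    have "sgi (f j) = (1 / real K) * (\<Sum>i<K. cot (ang K i) * sin (2 * of_int (h * int j) * ang K i))"
      unfolding f_def by (rule L1int[OF K nd[OF that]])
    also have "\<dots> = (1 / real K) * (\<Sum>i<K. cot (a i) * sin (2 * real j * (real_of_int h * a i)))"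
      unfolding a_def by (simp add: mult.commute mult.left_commute)
    finally show ?thesis using par2[of j] by simp
  qed
  have L2i: "(\<Sum>j=1..<K. (-1)^j * (real j / K - 1/2) * sin (2*j*(real_of_int h * a i))) = tan (real_of_int h * a i) / 2" for i
  proof -
    have "2 * real K * (real_of_int h * a i) = pi * of_int (h * (2 * int i + 1))"
      using K unfolding a_def ang_def by (simp add: field_simps)
    moreover have "odd (h * (2 * int i + 1))" using assms(2) by simp
    ultimately have "cos (2 * real K * (real_of_int h * a i)) = -1" by (simp only: cos_npi_int) simp
    hence "cos (real (2 * K) * (real_of_int h * a i)) = - 1" by simp
    from L2[OF oK this] show ?thesis .
  qed
  have P7: "(\<Sum>j\<in>{1..<K}. (-1)^(r j) * (real j / real K - 1/2))
      = (1 / real K) * (\<Sum>i<K. cot (a i) * (tan (real_of_int h * a i) / 2))"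
  proof -
    have "(\<Sum>j\<in>{1..<K}. (-1)^(r j) * (real j / real K - 1/2))
        = (\<Sum>j\<in>{1..<K}. (1 / real K) * (\<Sum>i<K. cot (a i) * ((-1)^j * (real j / K - 1/2) * sin (2*j*(real_of_int h * a i)))))"
      by (intro sum.cong refl) (simp add: four sum_distrib_left sum_distrib_right mult_ac)
    also have "\<dots> = (1 / real K) * (\<Sum>i<K. cot (a i) * (\<Sum>j=1..<K. (-1)^j * (real j / K - 1/2) * sin (2*j*(real_of_int h * a i))))"
      (is "?A = ?B")
    proof -
      have "?A = (1 / real K) * (\<Sum>j\<in>{1..<K}. \<Sum>i<K. cot (a i) * ((-1)^j * (real j / K - 1/2) * sin (2*j*(real_of_int h * a i))))"
        by (simp only: sum_distrib_left)
      also have "\<dots> = (1 / real K) * (\<Sum>i<K. \<Sum>j\<in>{1..<K}. cot (a i) * ((-1)^j * (real j / K - 1/2) * sin (2*j*(real_of_int h * a i))))"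
        by (subst sum.swap) (rule refl)
      also have "\<dots> = ?B" by (simp only: sum_distrib_left)
      finally show ?thesis .
    qed
    also have "\<dots> = (1 / real K) * (\<Sum>i<K. cot (a i) * (tan (real_of_int h * a i) / 2))"
      by (simp only: L2i)
    finally show ?thesis .
  qed
  have P8: "(\<Sum>j\<in>{1..k} - {(k + 1) div 2}.
         tan (pi * real_of_int h * real_of_int (2 * j - 1) / (2 * real_of_int k)) *
         cot (pi * real_of_int (2 * j - 1) / (2 * real_of_int k)))
       = (\<Sum>i<K. cot (a i) * tan (real_of_int h * a i))"
  proof -
    let ?g = "\<lambda>j. tan (pi * real_of_int h * real_of_int (2 * j - 1) / (2 * real_of_int k)) *
         cot (pi * real_of_int (2 * j - 1) / (2 * real_of_int k))"
    have mid: "(k + 1) div 2 \<in> {1..k}" using assms(4) by auto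
    have gm: "?g ((k + 1) div 2) = 0"
    proof -
      have e: "2 * ((k + 1) div 2) - 1 = k" using assms(3) by (auto elim!: oddE)
      have q: "pi * real_of_int k / (2 * real_of_int k) = pi / 2" using assms(4) by simp
      show ?thesis unfolding e q by (simp add: cot_def)
    qed
    have d1: "(\<Sum>j\<in>{1..k} - {(k + 1) div 2}. ?g j) = (\<Sum>j\<in>{1..k}. ?g j)"
      using sum_diff1[of "{1..k}" ?g] mid gm by simp
    have se: "{1..k} = (\<lambda>i. int i + 1) ` {..<K}"
    proof -
      have "{1..k} = {1..<k+1}" by auto
      hence "{1..k} = (\<lambda>x. x + 1) ` {0..<k}" by (simp add: image_add_atLeastLessThan')
      also have "{0..<k} = int ` {..<K}" using kK by (simp add: image_int_atLeastLessThan lessThan_atLeast0)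
      finally show ?thesis by (simp add: image_image)
    qed
    have "(\<Sum>j\<in>{1..k}. ?g j) = (\<Sum>i<K. ?g (int i + 1))"
      unfolding se by (subst sum.reindex) (auto simp: inj_on_def)
    also have "\<dots> = (\<Sum>i<K. cot (a i) * tan (real_of_int h * a i))"
      using K by (intro sum.cong refl) (simp add: a_def ang_def kK field_simps)
    finally show ?thesis using d1 by simp
  qed
  have mK: "real m / real K = (real K - 1) / (2 * real K)" using m by (simp add: field_simps)
  have rk: "real_of_int k = real K" using kK by simp
  have sd: "(\<Sum>i<K. cot (a i) * (tan (real_of_int h * a i) / 2)) = (\<Sum>i<K. cot (a i) * tan (real_of_int h * a i)) / 2"
    by (simp add: sum_divide_distrib)
  show ?thesis
    unfolding P8 P5 P7 sd mK unfolding rk using K by (simp add: field_simps)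
qed


end
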